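(* Let $n\ge2$, let $X_1,\dots,X_n$ be infinite dimensional Hilbert spaces and $D_k\in\mathcal{B}(X_k)$. Then for every $A\in\mathcal{B}_n$, $$\bigcup_{k=1}^n\sigma(D_k)=\sigma(T_n^d(A))\cup\Delta,$$ where $\Delta$ is the set of $\lambda\in\mathbb{C}$ such that either (a) there is $k\in\{2,\dots,n-1\}$ with $\big(\lambda\in\sigma_r(D_k)$ and $\beta(D_k-\lambda)\le\sum_{s=k+1}^n\alpha(D_s-\lambda)\big)$ or $\big(\lambda\in\sigma_l(D_k)$ and $\alpha(D_k-\lambda)\le\sum_{s=1}^{k-1}\beta(D_s-\lambda)\big)$; or (b) $0<\beta(D_1-\lambda)\le\sum_{s=2}^n\alpha(D_s-\lambda)$ or $0<\alpha(D_n-\lambda)\le\sum_{s=1}^{n-1}\beta(D_s-\lambda)$. In particular, if $\Delta=\emptyset$ then $\bigcup_{k=1}^n\sigma(D_k)=\sigma(T_n^d(A))$ for every $A\in\mathcal{B}_n$.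
   Context: For a bounded operator $T$, $\alpha(T)=\dim\mathcal{N}(T)$, $\beta(T)=\operatorname{codim}\mathcal{R}(T)$, values in $\{0,1,\dots\}\cup\{\infty\}$, sums and comparisons taken in this extended set. $T$ is left invertible if $\alpha(T)=0$ and $\mathcal{R}(T)$ is closed and complemented, right invertible if $\beta(T)=0$ and $\mathcal{N}(T)$ is complemented, invertible if both. $\sigma_l,\sigma_r,\sigma$ denote the sets of $\lambda\in\mathbb{C}$ with $\lambda-T$ not left invertible, not right invertible, not invertible. $\mathcal{B}_n$ is the set of tuples $A=(A_{ij})_{1\le i<j\le n}$, $A_{ij}\in\mathcal{B}(X_j,X_i)$; $T_n^d(A)$ is the upper triangular operator matrix on $X_1\oplus\cdots\oplus X_n$ with diagonal $D_1,\dots,D_n$, entries $A_{ij}$ above the diagonal and zeros below. *)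

theory Defs
  imports "HOL-Analysis.Analysis" "HOL-Library.Extended_Nat"
begin

class complex_vector = real_vector +
  fixes scaleC :: "complex \<Rightarrow> 'a \<Rightarrow> 'a"
  assumes scaleC_add_right: "scaleC a (x + y) = scaleC a x + scaleC a y"
    and scaleC_add_left: "scaleC (a + b) x = scaleC a x + scaleC b x"
    and scaleC_scaleC: "scaleC a (scaleC b x) = scaleC (a * b) x"
    and scaleC_one: "scaleC 1 x = x"
    and scaleR_scaleC: "scaleR r x = scaleC (complex_of_real r) x"

class complex_normed_vector = complex_vector + real_normed_vector +
  assumes norm_scaleC: "norm (scaleC a x) = cmod a * norm x"

class chilbert_space = complex_normed_vector + complete_space +
  fixes cinner :: "'a \<Rightarrow> 'a \<Rightarrow> complex"
  assumes cinner_commute: "cinner x y = cnj (cinner y x)"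
    and cinner_add_left: "cinner (x + y) z = cinner x z + cinner y z"
    and cinner_scaleC_left: "cinner (scaleC r x) y = cnj r * cinner x y"
    and cinner_self_nonneg: "0 \<le> Re (cinner x x)"
    and cinner_eq_zero_iff: "cinner x x = 0 \<longleftrightarrow> x = 0"
    and norm_eq_sqrt_cinner: "norm x = sqrt (Re (cinner x x))"

definition csubspace :: "'a::complex_vector set \<Rightarrow> bool" where
  "csubspace M \<longleftrightarrow> 0 \<in> M \<and> (\<forall>x\<in>M. \<forall>y\<in>M. x + y \<in> M) \<and> (\<forall>c. \<forall>x\<in>M. scaleC c x \<in> M)"

definition closed_csubspace :: "'a::complex_normed_vector set \<Rightarrow> bool" where
  "closed_csubspace M \<longleftrightarrow> csubspace M \<and> closed M"

definition cspan :: "'a::complex_vector set \<Rightarrow> 'a set" where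
  "cspan S = {(\<Sum>x\<in>F. scaleC (c x) x) | F c. finite F \<and> F \<subseteq> S}"

definition setsum :: "'a::ab_group_add set \<Rightarrow> 'a set \<Rightarrow> 'a set" where
  "setsum M N = {m + k | m k. m \<in> M \<and> k \<in> N}"

definition codim_in :: "'a::complex_vector set \<Rightarrow> 'a set \<Rightarrow> enat" where
  "codim_in R N =
     (if \<exists>F. finite F \<and> F \<subseteq> N \<and> setsum R (cspan F) = N
      then enat (LEAST m. \<exists>F. finite F \<and> F \<subseteq> N \<and> card F = m \<and> setsum R (cspan F) = N)
      else \<infinity>)"

definition cdim :: "'a::complex_vector set \<Rightarrow> enat" where
  "cdim M = codim_in {0} M"

definition infinite_dim :: "'a::complex_vector set \<Rightarrow> bool" where
  "infinite_dim M \<longleftrightarrow> cdim M = \<infinity>"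

definition complemented_in :: "'a::complex_normed_vector set \<Rightarrow> 'a set \<Rightarrow> bool" where
  "complemented_in M N \<longleftrightarrow>
     (\<exists>C. closed_csubspace C \<and> C \<subseteq> N \<and> M \<inter> C = {0} \<and> setsum M C = N)"

definition bounded_clinear_on :: "'a::complex_normed_vector set \<Rightarrow> 'a set \<Rightarrow> ('a \<Rightarrow> 'a) \<Rightarrow> bool" where
  "bounded_clinear_on M N f \<longleftrightarrow>
     (\<forall>x\<in>M. f x \<in> N) \<and> (\<forall>x\<in>M. \<forall>y\<in>M. f (x + y) = f x + f y) \<and>
     (\<forall>c. \<forall>x\<in>M. f (scaleC c x) = scaleC c (f x)) \<and>
     (\<exists>K. \<forall>x\<in>M. norm (f x) \<le> K * norm x)"

definition kernel_on :: "'a::complex_vector set \<Rightarrow> ('a \<Rightarrow> 'a) \<Rightarrow> 'a set" where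
  "kernel_on M T = {x \<in> M. T x = 0}"

definition alpha_op :: "'a::complex_vector set \<Rightarrow> ('a \<Rightarrow> 'a) \<Rightarrow> enat" where
  "alpha_op M T = cdim (kernel_on M T)"

definition beta_op :: "'a::complex_vector set \<Rightarrow> 'a set \<Rightarrow> ('a \<Rightarrow> 'a) \<Rightarrow> enat" where
  "beta_op M N T = codim_in (T ` M) N"

definition left_invertible_on :: "'a::complex_normed_vector set \<Rightarrow> 'a set \<Rightarrow> ('a \<Rightarrow> 'a) \<Rightarrow> bool" where
  "left_invertible_on M N T \<longleftrightarrow>
     alpha_op M T = 0 \<and> closed (T ` M) \<and> complemented_in (T ` M) N"

definition right_invertible_on :: "'a::complex_normed_vector set \<Rightarrow> 'a set \<Rightarrow> ('a \<Rightarrow> 'a) \<Rightarrow> bool" where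
  "right_invertible_on M N T \<longleftrightarrow> beta_op M N T = 0 \<and> complemented_in (kernel_on M T) M"

definition invertible_on :: "'a::complex_normed_vector set \<Rightarrow> 'a set \<Rightarrow> ('a \<Rightarrow> 'a) \<Rightarrow> bool" where
  "invertible_on M N T \<longleftrightarrow> left_invertible_on M N T \<and> right_invertible_on M N T"

definition lam_minus :: "complex \<Rightarrow> ('a::complex_vector \<Rightarrow> 'a) \<Rightarrow> 'a \<Rightarrow> 'a" where
  "lam_minus \<mu> T = (\<lambda>x. scaleC \<mu> x - T x)"

definition minus_lam :: "('a::complex_vector \<Rightarrow> 'a) \<Rightarrow> complex \<Rightarrow> 'a \<Rightarrow> 'a" where
  "minus_lam T \<mu> = (\<lambda>x. T x - scaleC \<mu> x)"

definition spec_l :: "'a::complex_normed_vector set \<Rightarrow> ('a \<Rightarrow> 'a) \<Rightarrow> complex set" where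
  "spec_l M T = {\<mu>. \<not> left_invertible_on M M (lam_minus \<mu> T)}"

definition spec_r :: "'a::complex_normed_vector set \<Rightarrow> ('a \<Rightarrow> 'a) \<Rightarrow> complex set" where
  "spec_r M T = {\<mu>. \<not> right_invertible_on M M (lam_minus \<mu> T)}"

definition spec :: "'a::complex_normed_vector set \<Rightarrow> ('a \<Rightarrow> 'a) \<Rightarrow> complex set" where
  "spec M T = {\<mu>. \<not> invertible_on M M (lam_minus \<mu> T)}"

text \<open>The Hilbert direct sum X_1 \<oplus> ... \<oplus> X_n is realised as the internal orthogonal sum of
  mutually orthogonal closed subspaces X_1, ..., X_n of an ambient Hilbert space.\<close>
definition orth_dsum :: "nat \<Rightarrow> (nat \<Rightarrow> 'a::complex_vector set) \<Rightarrow> 'a set" where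
  "orth_dsum n X = {(\<Sum>k=1..n. x k) | x. \<forall>k\<in>{1..n}. x k \<in> X k}"

definition components :: "nat \<Rightarrow> (nat \<Rightarrow> 'a::complex_vector set) \<Rightarrow> 'a \<Rightarrow> nat \<Rightarrow> 'a" where
  "components n X y = (THE x. (\<forall>k\<in>{1..n}. x k \<in> X k) \<and> (\<forall>k. k \<notin> {1..n} \<longrightarrow> x k = 0)
                              \<and> y = (\<Sum>k=1..n. x k))"

text \<open>\<B>_n: tuples (A_ij)_{1\<le>i<j\<le>n} with A_ij \<in> \<B>(X_j, X_i) (entries with i \<ge> j are never used).\<close>
definition Bn :: "nat \<Rightarrow> (nat \<Rightarrow> 'a::complex_normed_vector set) \<Rightarrow> (nat \<Rightarrow> nat \<Rightarrow> 'a \<Rightarrow> 'a) set" where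
  "Bn n X = {A. \<forall>i j. 1 \<le> i \<and> i < j \<and> j \<le> n \<longrightarrow> bounded_clinear_on (X j) (X i) (A i j)}"

definition Tnd :: "nat \<Rightarrow> (nat \<Rightarrow> 'a::complex_vector set) \<Rightarrow> (nat \<Rightarrow> 'a \<Rightarrow> 'a)
                    \<Rightarrow> (nat \<Rightarrow> nat \<Rightarrow> 'a \<Rightarrow> 'a) \<Rightarrow> 'a \<Rightarrow> 'a" where
  "Tnd n X D A y = (let x = components n X y in
      (\<Sum>i=1..n. D i (x i) + (\<Sum>j\<in>{i<..n}. A i j (x j))))"

definition Delta :: "nat \<Rightarrow> (nat \<Rightarrow> 'a::complex_normed_vector set) \<Rightarrow> (nat \<Rightarrow> 'a \<Rightarrow> 'a) \<Rightarrow> complex set" where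
  "Delta n X D = {\<mu>.
     (\<exists>k\<in>{2..n-1}.
        (\<mu> \<in> spec_r (X k) (D k) \<and>
           beta_op (X k) (X k) (minus_lam (D k) \<mu>)
             \<le> (\<Sum>s=k+1..n. alpha_op (X s) (minus_lam (D s) \<mu>)))
      \<or> (\<mu> \<in> spec_l (X k) (D k) \<and>
           alpha_op (X k) (minus_lam (D k) \<mu>)
             \<le> (\<Sum>s=1..k-1. beta_op (X s) (X s) (minus_lam (D s) \<mu>))))
   \<or> (0 < beta_op (X 1) (X 1) (minus_lam (D 1) \<mu>) \<and>
        beta_op (X 1) (X 1) (minus_lam (D 1) \<mu>) \<le> (\<Sum>s=2..n. alpha_op (X s) (minus_lam (D s) \<mu>)))
   \<or> (0 < alpha_op (X n) (minus_lam (D n) \<mu>) \<and>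
        alpha_op (X n) (minus_lam (D n) \<mu>) \<le> (\<Sum>s=1..n-1. beta_op (X s) (X s) (minus_lam (D s) \<mu>)))}"

end

theory Submission
  imports Defs
begin


global_interpretation cv: vector_space "scaleC :: complex \<Rightarrow> 'a \<Rightarrow> 'a::complex_vector"
  by unfold_locales (auto simp: scaleC_add_right scaleC_add_left scaleC_scaleC scaleC_one)

lemma cspan_eq: "cspan S = cv.span S"
  unfolding cspan_def cv.span_explicit by auto

lemma csubspace_eq: "csubspace M = cv.subspace M"
  unfolding csubspace_def cv.subspace_def by auto

lemma setsum_zero[simp]: "setsum R {0} = R"
  unfolding setsum_def by auto

lemma setsum_zero2[simp]: "setsum {0} N = N"
  unfolding setsum_def by auto

lemma scaleC_minus1: "scaleC (-1) x = - (x::'a::complex_vector)"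
  by (metis cv.scale_minus_left scaleC_one)

lemma cdim_le:
  assumes "csubspace M" "M \<subseteq> cspan H" "finite H"
  shows "cdim M \<le> enat (card H)"
proof -
  obtain B where B: "B \<subseteq> M" "cv.independent B" "M \<subseteq> cv.span B"
    using cv.basis_exists by metis
  have fc: "finite B \<and> card B \<le> card H"
    using cv.independent_span_bound[OF assms(3) B(2)] B(1) assms(2) by (auto simp: cspan_eq)
  have sp: "cspan B = M"
    using cv.span_subspace[OF B(1) B(3)] assms(1) by (simp add: cspan_eq csubspace_eq)
  have ex: "\<exists>F. finite F \<and> F \<subseteq> M \<and> setsum {0} (cspan F) = M"
    using fc B sp by (intro exI[of _ B]) auto
  have "(LEAST m. \<exists>F. finite F \<and> F \<subseteq> M \<and> card F = m \<and> setsum {0} (cspan F) = M) \<le> card B"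
    by (rule Least_le) (use fc B sp in auto)
  then show ?thesis using ex fc unfolding cdim_def codim_in_def by auto
qed

lemma cdim_fin:
  assumes "cdim M = enat m"
  shows "\<exists>F. finite F \<and> F \<subseteq> M \<and> card F = m \<and> cspan F = M"
proof -
  have ex: "\<exists>F. finite F \<and> F \<subseteq> M \<and> setsum {0} (cspan F) = M"
    using assms unfolding cdim_def codim_in_def by (auto split: if_splits)
  then have "m = (LEAST m. \<exists>F. finite F \<and> F \<subseteq> M \<and> card F = m \<and> setsum {0} (cspan F) = M)"
    using assms unfolding cdim_def codim_in_def by auto
  moreover have "\<exists>F. finite F \<and> F \<subseteq> M \<and> card F = (LEAST m. \<exists>F. finite F \<and> F \<subseteq> M \<and> card F = m \<and> setsum {0} (cspan F) = M) \<and> setsum {0} (cspan F) = M"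
    by (rule LeastI_ex) (use ex in auto)
  ultimately show ?thesis by auto
qed

lemma codim_le:
  assumes "finite G" "G \<subseteq> N" "setsum R (cspan G) = N"
  shows "codim_in R N \<le> enat (card G)"
proof -
  have "(LEAST m. \<exists>F. finite F \<and> F \<subseteq> N \<and> card F = m \<and> setsum R (cspan F) = N) \<le> card G"
    by (rule Least_le) (use assms in auto)
  then show ?thesis using assms unfolding codim_in_def by auto
qed

lemma codim_fin:
  assumes "codim_in R N = enat m"
  shows "\<exists>F. finite F \<and> F \<subseteq> N \<and> card F = m \<and> setsum R (cspan F) = N"
proof -
  have ex: "\<exists>F. finite F \<and> F \<subseteq> N \<and> setsum R (cspan F) = N"
    using assms unfolding codim_in_def by (auto split: if_splits)
  then have "m = (LEAST m. \<exists>F. finite F \<and> F \<subseteq> N \<and> card F = m \<and> setsum R (cspan F) = N)"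
    using assms unfolding codim_in_def by auto
  moreover have "\<exists>F. finite F \<and> F \<subseteq> N \<and> card F = (LEAST m. \<exists>F. finite F \<and> F \<subseteq> N \<and> card F = m \<and> setsum R (cspan F) = N) \<and> setsum R (cspan F) = N"
    by (rule LeastI_ex) (use ex in auto)
  ultimately show ?thesis by auto
qed

lemma cdim_zero_iff: "cdim M = 0 \<longleftrightarrow> M = {0}"
proof
  assume "cdim M = 0"
  then obtain F where "finite F" "card F = 0" "cspan F = M" using cdim_fin[of M 0] by (auto simp: zero_enat_def)
  then show "M = {0}" by (simp add: cspan_eq)
next
  assume "M = {0}"
  have "cdim M \<le> enat (card ({}::'a set))" by (rule cdim_le[of M "{}"]) (use \<open>M = {0}\<close> in \<open>auto simp: cspan_eq csubspace_def\<close>)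
  then show "cdim M = 0" by (simp add: zero_enat_def[symmetric])
qed

lemma codim_zero_iff: assumes "0 \<in> R" "R \<subseteq> N" shows "codim_in R N = 0 \<longleftrightarrow> R = N"
proof
  assume "codim_in R N = 0"
  then obtain F where "finite F" "card F = 0" "setsum R (cspan F) = N" using codim_fin[of R N 0] by (auto simp: zero_enat_def)
  then show "R = N" by (simp add: cspan_eq)
next
  assume "R = N"
  have "codim_in R N \<le> enat (card ({}::'a set))" by (rule codim_le[of "{}"]) (use \<open>R = N\<close> in \<open>auto simp: cspan_eq\<close>)
  then show "codim_in R N = 0" by (simp add: zero_enat_def[symmetric])
qed

definition clin_on :: "'a::complex_vector set \<Rightarrow> ('a \<Rightarrow> 'a) \<Rightarrow> bool" where
  "clin_on K f \<longleftrightarrow> (\<forall>x\<in>K. \<forall>y\<in>K. f (x + y) = f x + f y) \<and> (\<forall>c. \<forall>x\<in>K. f (scaleC c x) = scaleC c (f x))"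

lemma clin_on_add: "clin_on K f \<Longrightarrow> x \<in> K \<Longrightarrow> y \<in> K \<Longrightarrow> f (x + y) = f x + f y"
  by (simp add: clin_on_def)
lemma clin_on_scale: "clin_on K f \<Longrightarrow> x \<in> K \<Longrightarrow> f (scaleC c x) = scaleC c (f x)"
  by (simp add: clin_on_def)
lemma clin_on_zero: "clin_on K f \<Longrightarrow> 0 \<in> K \<Longrightarrow> f 0 = 0"
  using clin_on_add[of K f 0 0] by simp
lemma clin_on_neg: "clin_on K f \<Longrightarrow> x \<in> K \<Longrightarrow> f (- x) = - f x"
  using clin_on_scale[of K f x "-1"] by (simp add: scaleC_minus1)
lemma csub_add: "csubspace K \<Longrightarrow> x \<in> K \<Longrightarrow> y \<in> K \<Longrightarrow> x + y \<in> K"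
  by (simp add: csubspace_def)
lemma csub_scale: "csubspace K \<Longrightarrow> x \<in> K \<Longrightarrow> scaleC c x \<in> K"
  by (simp add: csubspace_def)
lemma csub_zero: "csubspace K \<Longrightarrow> 0 \<in> K"
  by (simp add: csubspace_def)
lemma csub_neg: "csubspace K \<Longrightarrow> x \<in> K \<Longrightarrow> - x \<in> K"
  using csub_scale[of K x "-1"] by (simp add: scaleC_minus1)
lemma csub_diff: "csubspace K \<Longrightarrow> x \<in> K \<Longrightarrow> y \<in> K \<Longrightarrow> x - y \<in> K"
  using csub_add[of K x "-y"] csub_neg[of K y] by simp
lemma csub_sum: "csubspace K \<Longrightarrow> (\<And>i. i \<in> I \<Longrightarrow> f i \<in> K) \<Longrightarrow> sum f I \<in> K"
  using cv.subspace_sum[of K I f] by (simp add: csubspace_eq)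
lemma clin_on_diff: "clin_on K f \<Longrightarrow> csubspace K \<Longrightarrow> x \<in> K \<Longrightarrow> y \<in> K \<Longrightarrow> f (x - y) = f x - f y"
  using clin_on_add[of K f "x - y" y] csub_diff[of K x y] by (simp add: algebra_simps)

lemma clin_on_sum:
  assumes "csubspace K" "clin_on K f" "finite t" "\<And>b. b \<in> t \<Longrightarrow> h b \<in> K"
  shows "f (\<Sum>b\<in>t. scaleC (c b) (h b)) = (\<Sum>b\<in>t. scaleC (c b) (f (h b)))"
  using assms(3,4)
proof (induction t rule: finite_induct)
  case empty
  then show ?case using clin_on_zero[OF assms(2) csub_zero[OF assms(1)]] by simp
next
  case (insert a t)
  have "(\<Sum>b\<in>t. scaleC (c b) (h b)) \<in> K"
    using insert by (intro csub_sum[OF assms(1)] csub_scale[OF assms(1)]) auto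
  moreover have "scaleC (c a) (h a) \<in> K" using insert by (intro csub_scale[OF assms(1)]) auto
  ultimately show ?case using insert clin_on_add[OF assms(2)] clin_on_scale[OF assms(2)] by simp
qed

lemma clin_on_sum2:
  assumes "csubspace K" "clin_on K f" "finite t" "\<And>b. b \<in> t \<Longrightarrow> h b \<in> K"
  shows "f (\<Sum>b\<in>t. h b) = (\<Sum>b\<in>t. f (h b))"
  using clin_on_sum[OF assms, where c="\<lambda>_. 1"] by (simp add: scaleC_one)

lemma clin_on_image_subspace:
  assumes "csubspace K" "clin_on K f" shows "csubspace (f ` K)"
  unfolding csubspace_def
proof (intro conjI ballI allI)
  show "0 \<in> f ` K" using clin_on_zero[OF assms(2) csub_zero[OF assms(1)]] csub_zero[OF assms(1)] by force
next
  fix x y assume "x \<in> f ` K" "y \<in> f ` K"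
  then obtain a b where "a \<in> K" "b \<in> K" "x = f a" "y = f b" by auto
  then show "x + y \<in> f ` K" using clin_on_add[OF assms(2)] csub_add[OF assms(1)] by (metis image_eqI)
next
  fix c x assume "x \<in> f ` K"
  then obtain a where "a \<in> K" "x = f a" by auto
  then show "scaleC c x \<in> f ` K" using clin_on_scale[OF assms(2)] csub_scale[OF assms(1)] by (metis image_eqI)
qed

lemma clin_on_span:
  assumes "csubspace K" "clin_on K f" "F \<subseteq> K" "v \<in> cspan F"
  shows "f v \<in> cspan (f ` F)"
proof -
  obtain t c where t: "finite t" "t \<subseteq> F" "v = (\<Sum>b\<in>t. scaleC (c b) b)"
    using assms(4) unfolding cspan_def by auto
  have "f v = (\<Sum>b\<in>t. scaleC (c b) (f b))"
    using t assms by (subst t(3), intro clin_on_sum[OF assms(1,2)]) auto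
  also have "\<dots> \<in> cv.span (f ` F)"
    using t by (intro cv.span_sum cv.span_scale cv.span_base) auto
  finally show ?thesis by (simp add: cspan_eq)
qed

lemma span_in_subspace: "csubspace K \<Longrightarrow> F \<subseteq> K \<Longrightarrow> cspan F \<subseteq> K"
  by (simp add: cspan_eq csubspace_eq cv.span_minimal)

lemma rank_le:
  assumes K: "csubspace K" and lin: "clin_on K \<pi>" and img: "\<pi> ` K \<subseteq> P" and P: "csubspace P"
  shows "cdim K \<le> cdim P + cdim {x\<in>K. \<pi> x = 0}"
proof (cases "cdim P")
  case (enat p)
  note p = enat
  show ?thesis
  proof (cases "cdim {x\<in>K. \<pi> x = 0}")
    case (enat z)
    obtain Fp where Fp: "finite Fp" "Fp \<subseteq> P" "card Fp = p" "cspan Fp = P" using cdim_fin[OF p] by auto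
    obtain Fz where Fz: "finite Fz" "Fz \<subseteq> {x\<in>K. \<pi> x = 0}" "card Fz = z" "cspan Fz = {x\<in>K. \<pi> x = 0}"
      using cdim_fin[OF enat] by auto
    obtain Bp where Bp: "Bp \<subseteq> \<pi> ` K" "cv.independent Bp" "\<pi> ` K \<subseteq> cv.span Bp"
      using cv.basis_exists by metis
    have fBp: "finite Bp \<and> card Bp \<le> card Fp"
      using cv.independent_span_bound[OF Fp(1) Bp(2)] Bp(1) img Fp(4) by (auto simp: cspan_eq)
    have "\<forall>b\<in>Bp. \<exists>y. y \<in> K \<and> \<pi> y = b" using Bp(1) by auto
    then obtain g where g: "\<And>b. b \<in> Bp \<Longrightarrow> g b \<in> K \<and> \<pi> (g b) = b" by metis
    define H where "H = g ` Bp \<union> Fz"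
    have fH: "finite H" using fBp Fz(1) H_def by auto
    have cH: "card H \<le> p + z"
    proof -
      have "card H \<le> card (g ` Bp) + card Fz" unfolding H_def by (rule card_Un_le)
      also have "\<dots> \<le> card Bp + card Fz" using card_image_le fBp by auto
      finally show ?thesis using fBp Fp(3) Fz(3) by auto
    qed
    have "K \<subseteq> cspan H"
    proof
      fix y assume y: "y \<in> K"
      have "\<pi> y \<in> cv.span Bp" using Bp(3) y by auto
      then obtain u where u: "\<pi> y = (\<Sum>v\<in>Bp. scaleC (u v) v)" using cv.span_finite[of Bp] fBp by auto
      define w where "w = (\<Sum>b\<in>Bp. scaleC (u b) (g b))"
      have wK: "w \<in> K" unfolding w_def using g by (intro csub_sum[OF K] csub_scale[OF K]) auto
      have "\<pi> w = (\<Sum>b\<in>Bp. scaleC (u b) (\<pi> (g b)))"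
        unfolding w_def using g fBp by (intro clin_on_sum[OF K lin]) auto
      also have "\<dots> = \<pi> y" using u g by simp
      finally have pw: "\<pi> w = \<pi> y" .
      have "y - w \<in> {x\<in>K. \<pi> x = 0}" using clin_on_diff[OF lin K y wK] pw csub_diff[OF K y wK] by simp
      then have "y - w \<in> cv.span H" using Fz(4) cv.span_mono[of Fz H] H_def by (auto simp: cspan_eq)
      moreover have "w \<in> cv.span H" unfolding w_def H_def
        by (intro cv.span_sum cv.span_scale cv.span_base) auto
      ultimately have "(y - w) + w \<in> cv.span H" by (rule cv.span_add)
      then show "y \<in> cspan H" by (simp add: cspan_eq)
    qed
    then have "cdim K \<le> enat (card H)" using cdim_le[OF K _ fH] by auto
    also have "\<dots> \<le> enat p + enat z" using cH by simp
    finally show ?thesis using p enat by simp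
  qed simp
qed simp

lemma quot_le:
  assumes K: "csubspace K" and lin: "clin_on K \<psi>" and Rg: "csubspace Rg"
    and inj: "\<forall>x\<in>K. \<psi> x \<in> Rg \<longrightarrow> x = 0" and G: "finite G"
    and img: "\<psi> ` K \<subseteq> setsum Rg (cspan G)"
  shows "cdim K \<le> enat (card G)"
proof -
  obtain B where B: "B \<subseteq> K" "cv.independent B" "K \<subseteq> cv.span B"
    using cv.basis_exists by metis
  have fB: "finite B \<and> card B \<le> card G"
  proof (rule ccontr)
    assume nf: "\<not> (finite B \<and> card B \<le> card G)"
    obtain I where I: "I \<subseteq> B" "finite I" "card I = Suc (card G)"
    proof (cases "finite B")
      case True
      then have "Suc (card G) \<le> card B" using nf by auto
      then show ?thesis using that obtain_subset_with_card_n by metis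
    next
      case False
      then show ?thesis using that infinite_arbitrarily_large by metis
    qed
    have IK: "I \<subseteq> K" using I B by auto
    have "\<forall>i\<in>I. \<exists>r g. r \<in> Rg \<and> g \<in> cspan G \<and> \<psi> i = r + g"
      using img IK unfolding setsum_def by blast
    then obtain r g where rg: "\<And>i. i \<in> I \<Longrightarrow> r i \<in> Rg \<and> g i \<in> cspan G \<and> \<psi> i = r i + g i" by metis
    have injg: "inj_on g I"
    proof (rule inj_onI)
      fix i j assume ij: "i \<in> I" "j \<in> I" "g i = g j"
      have "\<psi> (i - j) = \<psi> i - \<psi> j" using clin_on_diff[OF lin K] ij IK by auto
      also have "\<dots> = r i - r j" using rg ij by simp
      finally have "\<psi> (i - j) \<in> Rg" using csub_diff[OF Rg] rg ij by simp
      moreover have "i - j \<in> K" using csub_diff[OF K] ij IK by auto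
      ultimately have "i - j = 0" using inj by auto
      then show "i = j" by simp
    qed
    have dep: "cv.dependent (g ` I)"
    proof (rule ccontr)
      assume ind: "cv.independent (g ` I)"
      have "g ` I \<subseteq> cv.span G" using rg by (auto simp: cspan_eq)
      then have "card (g ` I) \<le> card G" using cv.independent_span_bound[OF G ind] by auto
      then show False using card_image[OF injg] I by simp
    qed
    then obtain t u v0 where t: "finite t" "t \<subseteq> g ` I" "(\<Sum>v\<in>t. scaleC (u v) v) = 0" "v0 \<in> t" "u v0 \<noteq> 0"
      unfolding cv.dependent_explicit by blast
    define I' where "I' = {i\<in>I. g i \<in> t}"
    have tI': "t = g ` I'" using t(2) unfolding I'_def by auto
    have injI': "inj_on g I'" using injg unfolding I'_def by (auto intro: inj_on_subset)
    have fI': "finite I'" using I(2) unfolding I'_def by auto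
    have I'K: "I' \<subseteq> K" using IK unfolding I'_def by auto
    have sumg: "(\<Sum>i\<in>I'. scaleC (u (g i)) (g i)) = 0"
      using t(3) unfolding tI' by (simp add: sum.reindex[OF injI'])
    define x where "x = (\<Sum>i\<in>I'. scaleC (u (g i)) i)"
    have xK: "x \<in> K" unfolding x_def using I'K by (intro csub_sum[OF K] csub_scale[OF K]) auto
    have "\<psi> x = (\<Sum>i\<in>I'. scaleC (u (g i)) (\<psi> i))"
      unfolding x_def using I'K fI' by (intro clin_on_sum[OF K lin]) auto
    also have "\<dots> = (\<Sum>i\<in>I'. scaleC (u (g i)) (r i) + scaleC (u (g i)) (g i))"
      using rg unfolding I'_def by (intro sum.cong) (auto simp: scaleC_add_right)
    also have "\<dots> = (\<Sum>i\<in>I'. scaleC (u (g i)) (r i))"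
      using sumg by (simp add: sum.distrib)
    finally have "\<psi> x \<in> Rg" using rg unfolding I'_def
      by (auto intro!: csub_sum[OF Rg] csub_scale[OF Rg])
    then have x0: "x = 0" using inj xK by auto
    obtain i0 where i0: "i0 \<in> I'" "g i0 = v0" using t(4) tI' by auto
    have "u (g i0) = 0"
      using cv.independentD[OF B(2) fI', of "\<lambda>i. u (g i)" i0] I'K i0 x0 I(1) unfolding x_def I'_def
      by auto
    then show False using i0 t(5) by simp
  qed
  have "cdim K \<le> enat (card B)" using cdim_le[OF K B(3)[folded cspan_eq]] fB by auto
  then show ?thesis using fB by (meson enat_ord_simps(1) order_trans)
qed




lemma cinner_zero_left[simp]: "cinner 0 (x::'a::chilbert_space) = 0"
  using cinner_add_left[of 0 0 x] by simp

lemma cinner_sum_left: "cinner (\<Sum>i\<in>I. f i) (y::'a::chilbert_space) = (\<Sum>i\<in>I. cinner (f i) y)"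
  by (induction I rule: infinite_finite_induct) (auto simp: cinner_add_left)

lemma cinner_neg_left: "cinner (- x) (y::'a::chilbert_space) = - cinner x y"
  using cinner_scaleC_left[of "-1" x y] by (simp add: scaleC_minus1)

lemma cinner_diff_left: "cinner (x - z) (y::'a::chilbert_space) = cinner x y - cinner z y"
  using cinner_add_left[of x "-z" y] cinner_neg_left[of z y] by simp

lemma clin_on_subset: "clin_on M f \<Longrightarrow> K \<subseteq> M \<Longrightarrow> clin_on K f"
  unfolding clin_on_def by blast

locale tri =
  fixes n :: nat and X :: "nat \<Rightarrow> 'h::chilbert_space set" and D :: "nat \<Rightarrow> 'h \<Rightarrow> 'h"
    and A :: "nat \<Rightarrow> nat \<Rightarrow> 'h \<Rightarrow> 'h" and \<mu> :: complex
  assumes Xsub: "\<And>k. k \<in> {1..n} \<Longrightarrow> csubspace (X k)"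
    and orth: "\<And>j k x y. j \<in> {1..n} \<Longrightarrow> k \<in> {1..n} \<Longrightarrow> j \<noteq> k \<Longrightarrow> x \<in> X j \<Longrightarrow> y \<in> X k \<Longrightarrow> cinner x y = 0"
    and Dlin: "\<And>k. k \<in> {1..n} \<Longrightarrow> bounded_clinear_on (X k) (X k) (D k)"
    and Alin: "\<And>i j. 1 \<le> i \<Longrightarrow> i < j \<Longrightarrow> j \<le> n \<Longrightarrow> bounded_clinear_on (X j) (X i) (A i j)"
begin

definition "MM = orth_dsum n X"
definition "cmp i y = components n X y i"
definition "EE i = minus_lam (D i) \<mu>"
definition "rw i y = EE i (cmp i y) + (\<Sum>j\<in>{i<..n}. A i j (cmp j y))"
definition "SS = lam_minus \<mu> (Tnd n X D A)"
definition "UU b y = (\<Sum>i=1..b. rw i y)"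

definition "adm x \<longleftrightarrow> (\<forall>k\<in>{1..n}. x k \<in> X k) \<and> (\<forall>k. k \<notin> {1..n} \<longrightarrow> x k = 0)"

lemma decomp_zero:
  assumes "\<forall>k\<in>{1..n}. d k \<in> X k" "(\<Sum>k=1..n. d k) = 0" "j \<in> {1..n}"
  shows "d j = 0"
proof -
  have "0 = cinner (\<Sum>k=1..n. d k) (d j)" using assms(2) by simp
  also have "\<dots> = (\<Sum>k\<in>{1..n}. cinner (d k) (d j))" by (rule cinner_sum_left)
  also have "\<dots> = cinner (d j) (d j) + (\<Sum>k\<in>{1..n} - {j}. cinner (d k) (d j))"
    using assms(3) by (simp add: sum.remove)
  also have "(\<Sum>k\<in>{1..n} - {j}. cinner (d k) (d j)) = 0"
  proof (rule sum.neutral, rule ballI)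
    fix k assume "k \<in> {1..n} - {j}"
    then show "cinner (d k) (d j) = 0" using assms(1,3) by (intro orth[of k j]) auto
  qed
  finally show ?thesis using cinner_eq_zero_iff[of "d j"] by simp
qed

lemma sub_X: "k \<in> {1..n} \<Longrightarrow> x \<in> X k \<Longrightarrow> y \<in> X k \<Longrightarrow> x - y \<in> X k"
  using csub_diff Xsub by blast

lemma cmp_build:
  assumes "adm x"
  shows "components n X (\<Sum>k=1..n. x k) = x"
  unfolding components_def
proof (rule the_equality)
  show "(\<forall>k\<in>{1..n}. x k \<in> X k) \<and> (\<forall>k. k \<notin> {1..n} \<longrightarrow> x k = 0) \<and> (\<Sum>k=1..n. x k) = (\<Sum>k=1..n. x k)"
    using assms unfolding adm_def by auto
next
  fix x' assume h: "(\<forall>k\<in>{1..n}. x' k \<in> X k) \<and> (\<forall>k. k \<notin> {1..n} \<longrightarrow> x' k = 0) \<and> (\<Sum>k=1..n. x k) = (\<Sum>k=1..n. x' k)"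
  show "x' = x"
  proof
    fix k show "x' k = x k"
    proof (cases "k \<in> {1..n}")
      case True
      have "(\<Sum>k=1..n. x' k - x k) = 0" using h by (simp add: sum_subtractf)
      then have "x' k - x k = 0"
        using decomp_zero[of "\<lambda>k. x' k - x k" k] True h assms sub_X unfolding adm_def by blast
      then show ?thesis by simp
    next
      case False
      then show ?thesis using h assms unfolding adm_def by auto
    qed
  qed
qed

lemma MM_cases:
  assumes "y \<in> MM"
  shows "adm (\<lambda>i. cmp i y) \<and> y = (\<Sum>k=1..n. cmp k y)"
proof -
  obtain x where x: "\<forall>k\<in>{1..n}. x k \<in> X k" "y = (\<Sum>k=1..n. x k)"
    using assms unfolding MM_def orth_dsum_def by auto
  define x' where "x' k = (if k \<in> {1..n} then x k else 0)" for k
  have adm: "adm x'" using x unfolding adm_def x'_def by auto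
  have y: "y = (\<Sum>k=1..n. x' k)" using x unfolding x'_def by simp
  have "(\<lambda>i. cmp i y) = x'" unfolding cmp_def using cmp_build[OF adm] y by simp
  then show ?thesis using adm y by (metis (no_types))
qed

lemma build_M: "adm x \<Longrightarrow> (\<Sum>k=1..n. x k) \<in> MM"
  unfolding MM_def orth_dsum_def adm_def by auto

lemma cmp_build': "adm x \<Longrightarrow> cmp i (\<Sum>k=1..n. x k) = x i"
  using cmp_build unfolding cmp_def by simp

lemma cmp_in: "y \<in> MM \<Longrightarrow> i \<in> {1..n} \<Longrightarrow> cmp i y \<in> X i"
  using MM_cases unfolding adm_def by blast
lemma cmp_out: "y \<in> MM \<Longrightarrow> i \<notin> {1..n} \<Longrightarrow> cmp i y = 0"
  using MM_cases unfolding adm_def by blast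
lemma cmp_sum: "y \<in> MM \<Longrightarrow> y = (\<Sum>k=1..n. cmp k y)"
  using MM_cases by blast

lemma adm_add: "adm x \<Longrightarrow> adm y \<Longrightarrow> adm (\<lambda>i. x i + y i)"
  unfolding adm_def using Xsub csub_add by fastforce
lemma adm_scale: "adm x \<Longrightarrow> adm (\<lambda>i. scaleC c (x i))"
  unfolding adm_def using Xsub csub_scale by fastforce
lemma adm_zero: "adm (\<lambda>i. 0)"
  unfolding adm_def using Xsub csub_zero by fastforce

lemma cmp_sum': "y \<in> MM \<Longrightarrow> (\<Sum>k=1..n. cmp k y) = y"
  using cmp_sum by metis

lemma adm_cmp: "y \<in> MM \<Longrightarrow> adm (\<lambda>i. cmp i y)"
  using MM_cases by blast

lemma sum_add_MM: "x \<in> MM \<Longrightarrow> y \<in> MM \<Longrightarrow> (\<Sum>k=1..n. cmp k x + cmp k y) = x + y"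
  using cmp_sum'[of x] cmp_sum'[of y] by (simp add: sum.distrib)

lemma sum_scale_MM: "x \<in> MM \<Longrightarrow> (\<Sum>k=1..n. scaleC c (cmp k x)) = scaleC c x"
  using cmp_sum'[of x] by (simp add: cv.scale_sum_right[symmetric])

lemma MM_sub: "csubspace MM"
  unfolding csubspace_def
proof (intro conjI ballI allI)
  show "0 \<in> MM" using build_M[OF adm_zero] by simp
next
  fix x y assume xy: "x \<in> MM" "y \<in> MM"
  show "x + y \<in> MM" using build_M[OF adm_add[OF adm_cmp[OF xy(1)] adm_cmp[OF xy(2)]]] sum_add_MM[OF xy] by simp
next
  fix c x assume x: "x \<in> MM"
  show "scaleC c x \<in> MM" using build_M[OF adm_scale[OF adm_cmp[OF x]]] sum_scale_MM[OF x] by simp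
qed

lemma cmp_add: assumes xy: "x \<in> MM" "y \<in> MM" shows "cmp i (x + y) = cmp i x + cmp i y"
proof -
  have "cmp i (\<Sum>k=1..n. cmp k x + cmp k y) = cmp i x + cmp i y"
    by (rule cmp_build'[OF adm_add[OF adm_cmp[OF xy(1)] adm_cmp[OF xy(2)]]])
  then show ?thesis using sum_add_MM[OF xy] by simp
qed

lemma cmp_scale: assumes x: "x \<in> MM" shows "cmp i (scaleC c x) = scaleC c (cmp i x)"
proof -
  have "cmp i (\<Sum>k=1..n. scaleC c (cmp k x)) = scaleC c (cmp i x)"
    by (rule cmp_build'[OF adm_scale[OF adm_cmp[OF x]]])
  then show ?thesis using sum_scale_MM[OF x] by simp
qed

lemma cmp_lin: "clin_on MM (cmp i)"
  unfolding clin_on_def using cmp_add cmp_scale by auto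

lemma cmp_zero: "cmp i 0 = 0"
  using cmp_build'[OF adm_zero] by simp

lemma X_in_M:
  assumes "k \<in> {1..n}" "x \<in> X k"
  shows "x \<in> MM" "cmp i x = (if i = k then x else 0)"
proof -
  have adm: "adm (\<lambda>i. if i = k then x else 0)"
    using assms Xsub unfolding adm_def by (auto intro: csub_zero)
  have "(\<Sum>j=1..n. (if j = k then x else 0)) = x" using assms(1) by (simp add: sum.delta)
  then show "x \<in> MM" "cmp i x = (if i = k then x else 0)"
    using build_M[OF adm] cmp_build'[OF adm, of i] by auto
qed

end



context tri
begin

lemma Xsub': "k \<in> {1..n} \<Longrightarrow> csubspace (X k)" by (rule Xsub)

lemma E_in: "k \<in> {1..n} \<Longrightarrow> x \<in> X k \<Longrightarrow> EE k x \<in> X k"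
  using Dlin[of k] csub_diff[OF Xsub', of k] csub_scale[OF Xsub', of k]
  unfolding EE_def minus_lam_def bounded_clinear_on_def by blast

lemma E_lin: "k \<in> {1..n} \<Longrightarrow> clin_on (X k) (EE k)"
  using Dlin[of k] unfolding EE_def minus_lam_def bounded_clinear_on_def clin_on_def
  by (auto simp: scaleC_add_right algebra_simps cv.scale_right_diff_distrib scaleC_scaleC mult.commute)

lemma A_in: "1 \<le> i \<Longrightarrow> i < j \<Longrightarrow> j \<le> n \<Longrightarrow> x \<in> X j \<Longrightarrow> A i j x \<in> X i"
  using Alin unfolding bounded_clinear_on_def by blast

lemma A_lin: "1 \<le> i \<Longrightarrow> i < j \<Longrightarrow> j \<le> n \<Longrightarrow> clin_on (X j) (A i j)"
  using Alin unfolding bounded_clinear_on_def clin_on_def by blast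

lemma E_zero: "k \<in> {1..n} \<Longrightarrow> EE k 0 = 0"
  using clin_on_zero[OF E_lin csub_zero[OF Xsub']] .

lemma A_zero: "1 \<le> i \<Longrightarrow> i < j \<Longrightarrow> j \<le> n \<Longrightarrow> A i j 0 = 0"
  using clin_on_zero[OF A_lin csub_zero[OF Xsub', of j]] by auto

lemma rw_in: "y \<in> MM \<Longrightarrow> i \<in> {1..n} \<Longrightarrow> rw i y \<in> X i"
  unfolding rw_def
  by (intro csub_add[OF Xsub'] E_in cmp_in csub_sum[OF Xsub'] A_in) auto

lemma rw_add: "i \<in> {1..n} \<Longrightarrow> x \<in> MM \<Longrightarrow> y \<in> MM \<Longrightarrow> rw i (x + y) = rw i x + rw i y"
proof -
  assume i: "i \<in> {1..n}" and xy: "x \<in> MM" "y \<in> MM"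
  have e: "EE i (cmp i (x + y)) = EE i (cmp i x) + EE i (cmp i y)"
    using cmp_add[OF xy] clin_on_add[OF E_lin[OF i]] cmp_in[OF xy(1) i] cmp_in[OF xy(2) i] by simp
  have a: "(\<Sum>j\<in>{i<..n}. A i j (cmp j (x + y))) = (\<Sum>j\<in>{i<..n}. A i j (cmp j x)) + (\<Sum>j\<in>{i<..n}. A i j (cmp j y))"
  proof -
    have "(\<Sum>j\<in>{i<..n}. A i j (cmp j (x + y))) = (\<Sum>j\<in>{i<..n}. A i j (cmp j x) + A i j (cmp j y))"
    proof (rule sum.cong[OF refl])
      fix j assume j: "j \<in> {i<..n}"
      then have j1: "j \<in> {1..n}" using i by auto
      show "A i j (cmp j (x + y)) = A i j (cmp j x) + A i j (cmp j y)"
        using cmp_add[OF xy] clin_on_add[OF A_lin] cmp_in[OF xy(1) j1] cmp_in[OF xy(2) j1] i j by simp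
    qed
    then show ?thesis by (simp add: sum.distrib)
  qed
  show ?thesis unfolding rw_def e a by (simp add: algebra_simps)
qed

lemma rw_scale: "i \<in> {1..n} \<Longrightarrow> x \<in> MM \<Longrightarrow> rw i (scaleC c x) = scaleC c (rw i x)"
proof -
  assume i: "i \<in> {1..n}" and x: "x \<in> MM"
  have e: "EE i (cmp i (scaleC c x)) = scaleC c (EE i (cmp i x))"
    using cmp_scale[OF x] clin_on_scale[OF E_lin[OF i]] cmp_in[OF x i] by simp
  have a: "(\<Sum>j\<in>{i<..n}. A i j (cmp j (scaleC c x))) = (\<Sum>j\<in>{i<..n}. scaleC c (A i j (cmp j x)))"
  proof (rule sum.cong[OF refl])
    fix j assume j: "j \<in> {i<..n}"
    then have j1: "j \<in> {1..n}" using i by auto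
    show "A i j (cmp j (scaleC c x)) = scaleC c (A i j (cmp j x))"
      using cmp_scale[OF x] clin_on_scale[OF A_lin] cmp_in[OF x j1] i j by simp
  qed
  show ?thesis unfolding rw_def e a by (simp add: cv.scale_sum_right scaleC_add_right)
qed

lemma rw_lin: "i \<in> {1..n} \<Longrightarrow> clin_on MM (rw i)"
  unfolding clin_on_def using rw_add rw_scale by auto

lemma rw_local: "(\<And>j. i \<le> j \<Longrightarrow> cmp j y = cmp j z) \<Longrightarrow> rw i y = rw i z"
  unfolding rw_def by (intro arg_cong2[where f="(+)"] sum.cong) auto

lemma rw_0: "rw i 0 = 0" if "i \<in> {1..n}"
  using clin_on_zero[OF rw_lin[OF that] csub_zero[OF MM_sub]] .

lemma rw_supp: "i \<in> {1..n} \<Longrightarrow> (\<And>j. i \<le> j \<Longrightarrow> cmp j y = 0) \<Longrightarrow> rw i y = 0"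
  using rw_local[of i y 0] rw_0 cmp_zero by metis

lemma adm_U: "b \<le> n \<Longrightarrow> y \<in> MM \<Longrightarrow> adm (\<lambda>i. if i \<in> {1..b} then rw i y else 0)"
  unfolding adm_def using rw_in Xsub' by (auto intro: csub_zero)

lemma U_sum: "b \<le> n \<Longrightarrow> UU b y = (\<Sum>k=1..n. if k \<in> {1..b} then rw k y else 0)"
  unfolding UU_def by (rule sum.mono_neutral_cong_left) auto

lemma U_in: "b \<le> n \<Longrightarrow> y \<in> MM \<Longrightarrow> UU b y \<in> MM"
  using U_sum build_M[OF adm_U] by simp

lemma cmp_U: "b \<le> n \<Longrightarrow> y \<in> MM \<Longrightarrow> cmp i (UU b y) = (if i \<in> {1..b} then rw i y else 0)"
  using U_sum cmp_build'[OF adm_U] by simp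

lemma U_lin: "b \<le> n \<Longrightarrow> clin_on MM (UU b)"
  unfolding clin_on_def UU_def
  by (auto simp: rw_add rw_scale sum.distrib cv.scale_sum_right intro!: sum.cong)

lemma S_eq: "y \<in> MM \<Longrightarrow> SS y = - UU n y"
proof -
  assume y: "y \<in> MM"
  have "Tnd n X D A y = (\<Sum>i=1..n. D i (cmp i y) + (\<Sum>j\<in>{i<..n}. A i j (cmp j y)))"
    unfolding Tnd_def cmp_def Let_def by simp
  moreover have "scaleC \<mu> y = (\<Sum>i=1..n. scaleC \<mu> (cmp i y))"
    using cv.scale_sum_right[of \<mu> "\<lambda>i. cmp i y" "{1..n}"] cmp_sum'[OF y] by simp
  ultimately have "SS y = (\<Sum>i=1..n. scaleC \<mu> (cmp i y)) - (\<Sum>i=1..n. D i (cmp i y) + (\<Sum>j\<in>{i<..n}. A i j (cmp j y)))"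
    unfolding SS_def lam_minus_def by simp
  also have "\<dots> = - (\<Sum>i=1..n. rw i y)"
    unfolding rw_def EE_def minus_lam_def by (simp add: sum_subtractf[symmetric] sum_negf[symmetric] algebra_simps)
  finally show ?thesis unfolding UU_def .
qed

end



context tri
begin

definition "Kab a b = {y\<in>MM. (\<forall>i. i \<notin> {a<..b} \<longrightarrow> cmp i y = 0) \<and> (\<forall>i\<in>{a<..b}. rw i y = 0)}"

lemma Kab_sub: assumes "b \<le> n" shows "csubspace (Kab a b)"
  unfolding csubspace_def
proof (intro conjI ballI allI)
  show "0 \<in> Kab a b" unfolding Kab_def using csub_zero[OF MM_sub] cmp_zero rw_0 assms by auto
next
  fix x y assume "x \<in> Kab a b" "y \<in> Kab a b"
  then show "x + y \<in> Kab a b" unfolding Kab_def using csub_add[OF MM_sub] cmp_add rw_add assms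
    by (auto simp: Suc_le_eq)
next
  fix c x assume "x \<in> Kab a b"
  then show "scaleC c x \<in> Kab a b" unfolding Kab_def using csub_scale[OF MM_sub] cmp_scale rw_scale assms
    by (auto simp: Suc_le_eq)
qed

lemma Kab_empty: assumes "b \<le> a" "b \<le> n" shows "Kab a b = {0}"
proof
  show "Kab a b \<subseteq> {0}"
  proof
    fix y assume y: "y \<in> Kab a b"
    then have "\<forall>i. cmp i y = 0" using assms unfolding Kab_def by auto
    then show "y \<in> {0}" using cmp_sum'[of y] y unfolding Kab_def by auto
  qed
  show "{0} \<subseteq> Kab a b" using csub_zero[OF Kab_sub[OF assms(2)]] by auto
qed

lemma ker_sub: "k \<in> {1..n} \<Longrightarrow> csubspace (kernel_on (X k) (EE k))"
  unfolding csubspace_def kernel_on_def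
  using csub_zero[OF Xsub'] csub_add[OF Xsub'] csub_scale[OF Xsub'] E_zero
    clin_on_add[OF E_lin] clin_on_scale[OF E_lin]
  by (auto simp: cv.scale_eq_0_iff)

lemma lemmaA: "b \<le> n \<Longrightarrow> cdim (Kab a b) \<le> (\<Sum>s\<in>{a<..b}. alpha_op (X s) (EE s))"
proof (induction b)
  case 0
  then show ?case using Kab_empty[of 0 a] cdim_zero_iff[of "{0::'h}"] by simp
next
  case (Suc b)
  show ?case
  proof (cases "Suc b \<le> a")
    case True
    then show ?thesis using Kab_empty[of "Suc b" a] Suc.prems cdim_zero_iff[of "{0::'h}"] by simp
  next
    case False
    then have ab: "a \<le> b" by simp
    have sb: "Suc b \<in> {1..n}" using Suc.prems by simp
    have K: "csubspace (Kab a (Suc b))" using Kab_sub Suc.prems by simp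
    have lin: "clin_on (Kab a (Suc b)) (cmp (Suc b))"
      by (rule clin_on_subset[OF cmp_lin]) (auto simp: Kab_def)
    have img: "cmp (Suc b) ` Kab a (Suc b) \<subseteq> kernel_on (X (Suc b)) (EE (Suc b))"
    proof
      fix z assume "z \<in> cmp (Suc b) ` Kab a (Suc b)"
      then obtain y where y: "y \<in> Kab a (Suc b)" "z = cmp (Suc b) y" by auto
      have yM: "y \<in> MM" using y unfolding Kab_def by auto
      have r0: "rw (Suc b) y = 0" using y ab unfolding Kab_def by auto
      have "(\<Sum>j\<in>{Suc b<..n}. A (Suc b) j (cmp j y)) = 0"
      proof (rule sum.neutral, rule ballI)
        fix j assume j: "j \<in> {Suc b<..n}"
        then have "cmp j y = 0" using y unfolding Kab_def by auto
        then show "A (Suc b) j (cmp j y) = 0" using A_zero j by auto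
      qed
      then have "EE (Suc b) (cmp (Suc b) y) = 0" using r0 unfolding rw_def by simp
      then show "z \<in> kernel_on (X (Suc b)) (EE (Suc b))"
        unfolding kernel_on_def using y cmp_in[OF yM sb] by auto
    qed
    have ker: "{x \<in> Kab a (Suc b). cmp (Suc b) x = 0} = Kab a b"
    proof
      show "{x \<in> Kab a (Suc b). cmp (Suc b) x = 0} \<subseteq> Kab a b"
      proof
        fix y assume y: "y \<in> {x \<in> Kab a (Suc b). cmp (Suc b) x = 0}"
        have "cmp i y = 0" if "i \<notin> {a<..b}" for i
        proof (cases "i = Suc b")
          case False
          then have "i \<notin> {a<..Suc b}" using that by auto
          then show ?thesis using y unfolding Kab_def by auto
        qed (use y in auto)
        then show "y \<in> Kab a b" using y unfolding Kab_def by auto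
      qed
    next
      show "Kab a b \<subseteq> {x \<in> Kab a (Suc b). cmp (Suc b) x = 0}"
      proof
        fix y assume y: "y \<in> Kab a b"
        have r: "rw (Suc b) y = 0" using y sb unfolding Kab_def by (intro rw_supp) auto
        have "rw i y = 0" if "i \<in> {a<..Suc b}" for i
          using that r y unfolding Kab_def by (cases "i = Suc b") auto
        then show "y \<in> {x \<in> Kab a (Suc b). cmp (Suc b) x = 0}"
          using y unfolding Kab_def by (auto simp: less_Suc_eq)
      qed
    qed
    have "cdim (Kab a (Suc b)) \<le> cdim (kernel_on (X (Suc b)) (EE (Suc b))) + cdim (Kab a b)"
      using rank_le[OF K lin img ker_sub[OF sb]] ker by simp
    also have "\<dots> \<le> alpha_op (X (Suc b)) (EE (Suc b)) + (\<Sum>s\<in>{a<..b}. alpha_op (X s) (EE s))"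
      using Suc.IH Suc.prems unfolding alpha_op_def by (intro add_left_mono) auto
    also have "\<dots> = (\<Sum>s\<in>{a<..Suc b}. alpha_op (X s) (EE s))"
    proof -
      have "{a<..Suc b} = insert (Suc b) {a<..b}" using ab by auto
      then show ?thesis by simp
    qed
    finally show ?thesis .
  qed
qed

end



context tri
begin

definition "Mb b = {y\<in>MM. \<forall>i. b < i \<longrightarrow> cmp i y = 0}"

lemma Mb_sub: "csubspace (Mb b)"
  unfolding csubspace_def Mb_def
  using csub_zero[OF MM_sub] csub_add[OF MM_sub] csub_scale[OF MM_sub] cmp_zero cmp_add cmp_scale
  by auto

lemma Mb_mono: "Mb b \<subseteq> Mb (Suc b)"
  unfolding Mb_def by auto

lemma U_Mb: "b \<le> n \<Longrightarrow> y \<in> MM \<Longrightarrow> UU b y \<in> Mb b"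
  unfolding Mb_def using U_in cmp_U by auto

lemma Mb_0: "Mb 0 = {0}"
proof
  show "Mb 0 \<subseteq> {0}"
  proof
    fix y assume y: "y \<in> Mb 0"
    have "cmp i y = 0" for i
      using y cmp_out[of y i] unfolding Mb_def by (cases "i = 0") auto
    then show "y \<in> {0}" using cmp_sum'[of y] y unfolding Mb_def by auto
  qed
  show "{0} \<subseteq> Mb 0" using csub_zero[OF Mb_sub] by auto
qed

lemma X_Mb: "k \<in> {1..n} \<Longrightarrow> k \<le> b \<Longrightarrow> x \<in> X k \<Longrightarrow> x \<in> Mb b"
  unfolding Mb_def using X_in_M by auto

lemma U_Suc: "UU (Suc b) y = UU b y + rw (Suc b) y"
  unfolding UU_def by simp

lemma lemmaB: "b \<le> n \<Longrightarrow> codim_in (UU b ` Mb b) (Mb b) \<le> (\<Sum>s=1..b. beta_op (X s) (X s) (EE s))"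
proof (induction b)
  case 0
  have "UU 0 ` Mb 0 = {0}" using Mb_0 unfolding UU_def by simp
  then show ?case using Mb_0 codim_zero_iff[of "{0::'h}" "{0}"] by simp
next
  case (Suc b)
  have sb: "Suc b \<in> {1..n}" using Suc.prems by simp
  have bn: "b \<le> n" using Suc.prems by simp
  have sum_eq: "(\<Sum>s=1..Suc b. beta_op (X s) (X s) (EE s)) = (\<Sum>s=1..b. beta_op (X s) (X s) (EE s)) + beta_op (X (Suc b)) (X (Suc b)) (EE (Suc b))"
    by simp
  show ?case
  proof (cases "(\<Sum>s=1..b. beta_op (X s) (X s) (EE s))")
    case (enat t)
    note tt = enat
    show ?thesis
    proof (cases "beta_op (X (Suc b)) (X (Suc b)) (EE (Suc b))")
      case (enat c2)
      obtain c1 where c1: "codim_in (UU b ` Mb b) (Mb b) = enat c1" "c1 \<le> t"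
        using Suc.IH[OF bn] tt by (cases "codim_in (UU b ` Mb b) (Mb b)") auto
      obtain G1 where G1: "finite G1" "G1 \<subseteq> Mb b" "card G1 = c1" "setsum (UU b ` Mb b) (cspan G1) = Mb b"
        using codim_fin[OF c1(1)] by auto
      obtain G2 where G2: "finite G2" "G2 \<subseteq> X (Suc b)" "card G2 = c2"
          "setsum (EE (Suc b) ` X (Suc b)) (cspan G2) = X (Suc b)"
        using codim_fin[OF enat[unfolded beta_op_def]] by auto
      have G2M: "cspan G2 \<subseteq> X (Suc b)" using span_in_subspace[OF Xsub'[OF sb] G2(2)] .
      have G1M: "cspan G1 \<subseteq> Mb b" using span_in_subspace[OF Mb_sub G1(2)] .
      have GG: "G1 \<union> G2 \<subseteq> Mb (Suc b)" using G1(2) Mb_mono G2(2) X_Mb[OF sb] by auto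
      have eq: "setsum (UU (Suc b) ` Mb (Suc b)) (cspan (G1 \<union> G2)) = Mb (Suc b)"
      proof
        from GG have "cspan (G1 \<union> G2) \<subseteq> Mb (Suc b)" by (rule span_in_subspace[OF Mb_sub])
        moreover have "UU (Suc b) ` Mb (Suc b) \<subseteq> Mb (Suc b)" using U_Mb[OF Suc.prems] unfolding Mb_def by auto
        ultimately show "setsum (UU (Suc b) ` Mb (Suc b)) (cspan (G1 \<union> G2)) \<subseteq> Mb (Suc b)"
          unfolding setsum_def using csub_add[OF Mb_sub] by blast
      next
        show "Mb (Suc b) \<subseteq> setsum (UU (Suc b) ` Mb (Suc b)) (cspan (G1 \<union> G2))"
        proof
          fix z assume z: "z \<in> Mb (Suc b)"
          have zM: "z \<in> MM" using z unfolding Mb_def by auto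
          have "cmp (Suc b) z \<in> X (Suc b)" using cmp_in[OF zM sb] .
          then obtain w g2 where wg: "w \<in> X (Suc b)" "g2 \<in> cspan G2" "cmp (Suc b) z = EE (Suc b) w + g2"
            using G2(4) unfolding setsum_def by blast
          have wM: "w \<in> MM" using X_in_M[OF sb wg(1)] by simp
          have g2X: "g2 \<in> X (Suc b)" using G2M wg(2) by auto
          have g2M: "g2 \<in> MM" using X_in_M[OF sb g2X] by simp
          have rw_w: "rw (Suc b) w = EE (Suc b) w"
          proof -
            have "(\<Sum>j\<in>{Suc b<..n}. A (Suc b) j (cmp j w)) = 0"
              using X_in_M(2)[OF sb wg(1)] A_zero by (intro sum.neutral) auto
            then show ?thesis unfolding rw_def using X_in_M(2)[OF sb wg(1)] by simp
          qed
          have UwM: "UU (Suc b) w \<in> MM" using U_in[OF Suc.prems wM] .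
          define z' where "z' = z - UU (Suc b) w - g2"
          have z'M: "z' \<in> MM" unfolding z'_def using zM UwM g2M csub_diff[OF MM_sub] by auto
          have cz': "cmp i z' = cmp i z - cmp i (UU (Suc b) w) - cmp i g2" for i
            unfolding z'_def using clin_on_diff[OF cmp_lin MM_sub] zM UwM g2M csub_diff[OF MM_sub] by simp
          have "z' \<in> Mb b"
            unfolding Mb_def
          proof (intro CollectI conjI allI impI)
            fix i assume i: "b < i"
            show "cmp i z' = 0"
            proof (cases "i = Suc b")
              case True
              then show ?thesis using cz' cmp_U[OF Suc.prems wM] sb rw_w wg(3) X_in_M(2)[OF sb g2X] by simp
            next
              case False
              then have "Suc b < i" using i by simp
              then show ?thesis using cz' cmp_U[OF Suc.prems wM] z X_in_M(2)[OF sb g2X] unfolding Mb_def by simp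
            qed
          qed (rule z'M)
          then obtain x' g1 where xg: "x' \<in> Mb b" "g1 \<in> cspan G1" "z' = UU b x' + g1"
            using G1(4) unfolding setsum_def by blast
          have x'M: "x' \<in> MM" using xg(1) unfolding Mb_def by auto
          have "rw (Suc b) x' = 0" using xg(1) sb unfolding Mb_def by (intro rw_supp) auto
          then have Ux': "UU (Suc b) x' = UU b x'" using U_Suc by simp
          have "z = UU (Suc b) (x' + w) + (g1 + g2)"
            using xg(3) Ux' clin_on_add[OF U_lin[OF Suc.prems] x'M wM] unfolding z'_def
            by (simp add: algebra_simps)
          moreover have "x' + w \<in> Mb (Suc b)"
            using csub_add[OF Mb_sub] xg(1) Mb_mono X_Mb[OF sb _ wg(1)] by blast
          moreover have "g1 + g2 \<in> cspan (G1 \<union> G2)"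
            using xg(2) wg(2) cv.span_mono[of G1 "G1 \<union> G2"] cv.span_mono[of G2 "G1 \<union> G2"]
            by (auto simp: cspan_eq intro!: cv.span_add)
          ultimately show "z \<in> setsum (UU (Suc b) ` Mb (Suc b)) (cspan (G1 \<union> G2))"
            unfolding setsum_def by blast
        qed
      qed
      have "codim_in (UU (Suc b) ` Mb (Suc b)) (Mb (Suc b)) \<le> enat (card (G1 \<union> G2))"
        by (rule codim_le) (use G1 G2 eq GG in auto)
      also have "\<dots> \<le> enat (t + c2)" using card_Un_le[of G1 G2] G1(3) G2(3) c1(2) by simp
      finally show ?thesis using sum_eq tt enat by simp
    qed (simp add: sum_eq)
  qed (simp add: sum_eq)
qed

end



context tri
begin

lemma cmp_neg: "y \<in> MM \<Longrightarrow> cmp i (- y) = - cmp i y"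
  using clin_on_neg[OF cmp_lin] .

lemma SB:
  assumes surj: "SS ` MM = MM" and k: "k \<in> {1..n}"
  shows "beta_op (X k) (X k) (EE k) \<le> (\<Sum>s\<in>{k<..n}. alpha_op (X s) (EE s))"
proof (cases "cdim (Kab k n)")
  case infinity
  then show ?thesis using lemmaA[of n k] by simp
next
  case (enat m)
  obtain F where F: "finite F" "F \<subseteq> Kab k n" "card F = m" "cspan F = Kab k n"
    using cdim_fin[OF enat] by auto
  have FM: "F \<subseteq> MM" using F(2) unfolding Kab_def by auto
  define \<phi> where "\<phi> y = EE k (cmp k y) - rw k y" for y
  have \<phi>_eq: "\<phi> y = - (\<Sum>j\<in>{k<..n}. A k j (cmp j y))" for y
    unfolding \<phi>_def rw_def by simp
  have \<phi>lin: "clin_on MM \<phi>"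
    unfolding clin_on_def \<phi>_def
    using cmp_add cmp_scale rw_add[OF k] rw_scale[OF k] clin_on_add[OF E_lin[OF k]] clin_on_scale[OF E_lin[OF k]]
      cmp_in[OF _ k]
    by (auto simp: algebra_simps cv.scale_right_diff_distrib)
  have \<phi>X: "y \<in> MM \<Longrightarrow> \<phi> y \<in> X k" for y
    unfolding \<phi>_def using E_in[OF k] cmp_in[OF _ k] rw_in[OF _ k] csub_diff[OF Xsub'[OF k]] by blast
  define G where "G = \<phi> ` F"
  have GX: "G \<subseteq> X k" unfolding G_def using \<phi>X FM by auto
  have eq: "setsum (EE k ` X k) (cspan G) = X k"
  proof
    show "setsum (EE k ` X k) (cspan G) \<subseteq> X k"
      unfolding setsum_def using span_in_subspace[OF Xsub'[OF k] GX] E_in[OF k] csub_add[OF Xsub'[OF k]] by blast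
  next
    show "X k \<subseteq> setsum (EE k ` X k) (cspan G)"
    proof
      fix y assume y: "y \<in> X k"
      have yM: "y \<in> MM" using X_in_M[OF k y] by simp
      then obtain u where u: "u \<in> MM" "y = SS u" using surj by auto
      have ru: "rw i u = - cmp i y" if "i \<in> {1..n}" for i
      proof -
        have "cmp i y = cmp i (- UU n u)" using u S_eq by simp
        also have "\<dots> = - rw i u" using cmp_neg[OF U_in[OF le_refl u(1)]] cmp_U[OF le_refl u(1)] that by simp
        finally show ?thesis by simp
      qed
      define vv where "vv j = (if j \<in> {k<..n} then cmp j u else 0)" for j
      have admv: "adm vv" unfolding adm_def vv_def using cmp_in[OF u(1)] k Xsub' by (auto intro: csub_zero)
      define v where "v = (\<Sum>j=1..n. vv j)"
      have vM: "v \<in> MM" unfolding v_def by (rule build_M[OF admv])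
      have cv: "cmp j v = vv j" for j unfolding v_def by (rule cmp_build'[OF admv])
      have vK: "v \<in> Kab k n"
        unfolding Kab_def
      proof (intro CollectI conjI allI impI ballI)
        fix i assume "i \<notin> {k<..n}" then show "cmp i v = 0" using cv vv_def by auto
      next
        fix i assume i: "i \<in> {k<..n}"
        have "rw i v = rw i u"
        proof (rule rw_local)
          fix j assume "i \<le> j"
          then show "cmp j v = cmp j u" using cv vv_def i cmp_out[OF u(1), of j] by auto
        qed
        also have "\<dots> = 0" using ru[of i] i X_in_M(2)[OF k y, of i] by simp
        finally show "rw i v = 0" .
      qed (rule vM)
      have "y = - rw k u" using ru[OF k] X_in_M(2)[OF k y, of k] by simp
      also have "\<dots> = EE k (- cmp k u) + \<phi> v"
      proof -
        have "EE k (- cmp k u) = - EE k (cmp k u)" using clin_on_neg[OF E_lin[OF k] cmp_in[OF u(1) k]] .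
        moreover have "\<phi> v = - (\<Sum>j\<in>{k<..n}. A k j (cmp j u))"
          unfolding \<phi>_eq using cv vv_def by simp
        ultimately show ?thesis unfolding rw_def by simp
      qed
      finally have ye: "y = EE k (- cmp k u) + \<phi> v" .
      have "\<phi> v \<in> cspan G" unfolding G_def using clin_on_span[OF MM_sub \<phi>lin FM] vK F(4) by auto
      moreover have "- cmp k u \<in> X k" using csub_neg[OF Xsub'[OF k] cmp_in[OF u(1) k]] .
      ultimately show "y \<in> setsum (EE k ` X k) (cspan G)" unfolding setsum_def using ye by blast
    qed
  qed
  have "beta_op (X k) (X k) (EE k) \<le> enat (card G)"
    unfolding beta_op_def using codim_le[of G "X k" "EE k ` X k"] eq GX F(1) G_def by auto
  also have "\<dots> \<le> enat m" using card_image_le[OF F(1), of \<phi>] F(3) G_def by simp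
  also have "\<dots> \<le> (\<Sum>s\<in>{k<..n}. alpha_op (X s) (EE s))" using lemmaA[of n k] enat by simp
  finally show ?thesis .
qed

end



context tri
begin

lemma IB:
  assumes inj: "\<forall>y\<in>MM. SS y = 0 \<longrightarrow> y = 0" and k: "k \<in> {1..n}"
  shows "alpha_op (X k) (EE k) \<le> (\<Sum>s=1..k-1. beta_op (X s) (X s) (EE s))"
proof (cases "codim_in (UU (k-1) ` Mb (k-1)) (Mb (k-1))")
  case infinity
  then show ?thesis using lemmaB[of "k-1"] k by (simp add: le_diff_conv)
next
  case (enat c)
  have kn: "k - 1 \<le> n" using k by auto
  obtain G where G: "finite G" "G \<subseteq> Mb (k-1)" "card G = c" "setsum (UU (k-1) ` Mb (k-1)) (cspan G) = Mb (k-1)"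
    using codim_fin[OF enat] by auto
  define \<psi> where "\<psi> x = (\<Sum>i=1..k-1. A i k x)" for x
  let ?K = "kernel_on (X k) (EE k)"
  have KX: "?K \<subseteq> X k" unfolding kernel_on_def by auto
  have Ain: "i \<in> {1..k-1} \<Longrightarrow> x \<in> X k \<Longrightarrow> A i k x \<in> X i" for i x using A_in k by auto
  have \<psi>lin: "clin_on (X k) \<psi>"
    unfolding clin_on_def \<psi>_def
  proof (intro conjI ballI allI)
    fix x y assume xy: "x \<in> X k" "y \<in> X k"
    show "(\<Sum>i = 1..k - 1. A i k (x + y)) = (\<Sum>i = 1..k - 1. A i k x) + (\<Sum>i = 1..k - 1. A i k y)"
      using xy clin_on_add[OF A_lin] k by (auto simp: sum.distrib[symmetric] intro!: sum.cong)
  next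
    fix c x assume x: "x \<in> X k"
    show "(\<Sum>i = 1..k - 1. A i k (scaleC c x)) = scaleC c (\<Sum>i = 1..k - 1. A i k x)"
      using x clin_on_scale[OF A_lin] k by (auto simp: cv.scale_sum_right intro!: sum.cong)
  qed
  have \<psi>Mb: "x \<in> X k \<Longrightarrow> \<psi> x \<in> Mb (k-1)" for x
  proof -
    assume x: "x \<in> X k"
    have "A i k x \<in> Mb (k-1)" if i: "i \<in> {1..k-1}" for i
      using X_Mb[of i "k-1" "A i k x"] Ain[OF i x] i k by auto
    then show ?thesis unfolding \<psi>_def by (intro csub_sum[OF Mb_sub])
  qed
  have Ulin': "clin_on (Mb (k-1)) (UU (k-1))"
    by (rule clin_on_subset[OF U_lin[OF kn]]) (auto simp: Mb_def)
  have Rg: "csubspace (UU (k-1) ` Mb (k-1))" by (rule clin_on_image_subspace[OF Mb_sub Ulin'])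
  have injq: "\<forall>x\<in>?K. \<psi> x \<in> UU (k-1) ` Mb (k-1) \<longrightarrow> x = 0"
  proof (intro ballI impI)
    fix x assume xK: "x \<in> ?K" and px: "\<psi> x \<in> UU (k-1) ` Mb (k-1)"
    have x: "x \<in> X k" "EE k x = 0" using xK unfolding kernel_on_def by auto
    have xM: "x \<in> MM" using X_in_M[OF k x(1)] by simp
    obtain z where z: "z \<in> Mb (k-1)" "\<psi> x = UU (k-1) z" using px by auto
    have zM: "z \<in> MM" using z unfolding Mb_def by auto
    define y where "y = x - z"
    have yM: "y \<in> MM" unfolding y_def using csub_diff[OF MM_sub xM zM] .
    have rwx: "rw i x = (if i < k then A i k x else 0)" if i: "i \<in> {1..n}" for i
    proof -
      have e: "EE i (cmp i x) = 0" using X_in_M(2)[OF k x(1), of i] x(2) E_zero[OF i] by auto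
      have "(\<Sum>j\<in>{i<..n}. A i j (cmp j x)) = (\<Sum>j\<in>{i<..n}. if j = k then A i k x else 0)"
        using X_in_M(2)[OF k x(1)] A_zero i by (intro sum.cong) auto
      also have "\<dots> = (if i < k then A i k x else 0)" using k by (simp add: sum.delta)
      finally show ?thesis unfolding rw_def using e by simp
    qed
    have rwz: "rw i z = 0" if i: "i \<in> {1..n}" "k \<le> i" for i
      using z i unfolding Mb_def by (intro rw_supp) auto
    have "UU n y = (\<Sum>i=1..n. rw i x - rw i z)"
      unfolding UU_def y_def
    proof (rule sum.cong[OF refl])
      fix i assume "i \<in> {1..n}"
      then show "rw i (x - z) = rw i x - rw i z" using clin_on_diff[OF rw_lin[of i] MM_sub xM zM] by simp
    qed
    also have "\<dots> = (\<Sum>i=1..n. (if i < k then A i k x else 0) - (if i < k then rw i z else 0))"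
      using rwx rwz by (intro sum.cong) auto
    also have "\<dots> = (\<Sum>i=1..n. if i < k then A i k x - rw i z else 0)"
      by (intro sum.cong) auto
    also have "\<dots> = (\<Sum>i=1..k-1. A i k x - rw i z)"
      using k by (intro sum.mono_neutral_cong_right) auto
    also have "\<dots> = \<psi> x - UU (k-1) z" unfolding \<psi>_def UU_def by (simp add: sum_subtractf)
    also have "\<dots> = 0" using z by simp
    finally have "SS y = 0" using S_eq[OF yM] by simp
    then have "y = 0" using inj yM by auto
    then have "cmp k x = cmp k z" unfolding y_def by simp
    moreover have "cmp k z = 0" using z k unfolding Mb_def by auto
    ultimately show "x = 0" using X_in_M(2)[OF k x(1), of k] by simp
  qed
  have "alpha_op (X k) (EE k) \<le> enat (card G)"
    unfolding alpha_op_def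
  proof (rule quot_le[OF ker_sub[OF k] clin_on_subset[OF \<psi>lin KX] Rg injq G(1)])
    show "\<psi> ` ?K \<subseteq> setsum (UU (k - 1) ` Mb (k - 1)) (cspan G)" using G(4) \<psi>Mb KX by auto
  qed
  also have "\<dots> \<le> (\<Sum>s=1..k-1. beta_op (X s) (X s) (EE s))" using lemmaB[OF kn] enat G(3) by simp
  finally show ?thesis .
qed

end



lemma kernel_conv:
  assumes "csubspace X" "clin_on X T"
  shows "kernel_on X (lam_minus \<mu> T) = kernel_on X (minus_lam T \<mu>)"
  unfolding kernel_on_def lam_minus_def minus_lam_def by (auto simp: algebra_simps)

lemma image_conv:
  assumes X: "csubspace X" and T: "clin_on X T"
  shows "lam_minus \<mu> T ` X = minus_lam T \<mu> ` X"
proof -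
  have e: "lam_minus \<mu> T x = minus_lam T \<mu> (- x)" "minus_lam T \<mu> x = lam_minus \<mu> T (- x)" if "x \<in> X" for x
    using clin_on_neg[OF T that] unfolding lam_minus_def minus_lam_def
    by (auto simp: cv.scale_minus_right)
  show ?thesis
  proof
    show "lam_minus \<mu> T ` X \<subseteq> minus_lam T \<mu> ` X" using e(1) csub_neg[OF X] by blast
    show "minus_lam T \<mu> ` X \<subseteq> lam_minus \<mu> T ` X" using e(2) csub_neg[OF X] by blast
  qed
qed

lemma inv_conv:
  assumes "csubspace X" "clin_on X T"
  shows "left_invertible_on X X (lam_minus \<mu> T) = left_invertible_on X X (minus_lam T \<mu>)"
    "right_invertible_on X X (lam_minus \<mu> T) = right_invertible_on X X (minus_lam T \<mu>)"
    "invertible_on X X (lam_minus \<mu> T) = invertible_on X X (minus_lam T \<mu>)"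
  unfolding invertible_on_def left_invertible_on_def right_invertible_on_def alpha_op_def beta_op_def
    kernel_conv[OF assms] image_conv[OF assms] by auto

lemma closed_csub_0: "closed_csubspace {0}"
  unfolding closed_csubspace_def csubspace_def by auto

lemma inv_of_bij:
  assumes X: "closed_csubspace X" and k: "kernel_on X F = {0}" and im: "F ` X = X"
  shows "invertible_on X X F"
proof -
  have X0: "0 \<in> X" using X unfolding closed_csubspace_def csubspace_def by auto
  have "alpha_op X F = 0" unfolding alpha_op_def k using cdim_zero_iff[of "{0::'a}"] by simp
  moreover have "beta_op X X F = 0" unfolding beta_op_def im using codim_zero_iff[OF X0] by simp
  moreover have "complemented_in (F ` X) X" unfolding im complemented_in_def
    using closed_csub_0 X0 by (intro exI[of _ "{0}"]) auto
  moreover have "complemented_in (kernel_on X F) X" unfolding k complemented_in_def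
    using X X0 by (intro exI[of _ X]) auto
  moreover have "closed (F ` X)" using X im unfolding closed_csubspace_def by simp
  ultimately show ?thesis unfolding invertible_on_def left_invertible_on_def right_invertible_on_def by simp
qed

lemma inv_ker:
  assumes "left_invertible_on X X F" shows "kernel_on X F = {0}"
  using assms cdim_zero_iff unfolding left_invertible_on_def alpha_op_def by auto

lemma inv_im:
  assumes "right_invertible_on X X F" "csubspace X" "clin_on X F" "F ` X \<subseteq> X"
  shows "F ` X = X"
proof -
  have "0 \<in> F ` X" using clin_on_zero[OF assms(3) csub_zero[OF assms(2)]] csub_zero[OF assms(2)] by force
  then show ?thesis using assms(1,4) codim_zero_iff[of "F ` X" X] unfolding right_invertible_on_def beta_op_def by auto
qed

lemma cinner_sum_right: "cinner (y::'a::chilbert_space) (\<Sum>i\<in>I. f i) = (\<Sum>i\<in>I. cinner y (f i))"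
proof -
  have "cinner y (\<Sum>i\<in>I. f i) = cnj (cinner (\<Sum>i\<in>I. f i) y)" by (rule cinner_commute)
  also have "\<dots> = (\<Sum>i\<in>I. cnj (cinner (f i) y))" by (simp add: cinner_sum_left)
  also have "\<dots> = (\<Sum>i\<in>I. cinner y (f i))" by (metis cinner_commute)
  finally show ?thesis .
qed

context tri
begin

lemma norm_cmp: assumes y: "y \<in> MM" shows "norm (cmp i y) \<le> norm y"
proof (cases "i \<in> {1..n}")
  case False
  then show ?thesis using cmp_out[OF y False] by simp
next
  case True
  have cc: "cinner (cmp k y) y = cinner (cmp k y) (cmp k y)" if k: "k \<in> {1..n}" for k
  proof -
    have "cinner (cmp k y) y = (\<Sum>j\<in>{1..n}. cinner (cmp k y) (cmp j y))"
      using cinner_sum_right[of "cmp k y" "\<lambda>j. cmp j y" "{1..n}"] cmp_sum'[OF y] by simp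
    also have "\<dots> = cinner (cmp k y) (cmp k y) + (\<Sum>j\<in>{1..n} - {k}. cinner (cmp k y) (cmp j y))"
      using k by (simp add: sum.remove)
    also have "(\<Sum>j\<in>{1..n} - {k}. cinner (cmp k y) (cmp j y)) = 0"
    proof (rule sum.neutral, rule ballI)
      fix j assume "j \<in> {1..n} - {k}"
      then show "cinner (cmp k y) (cmp j y) = 0" using k cmp_in[OF y] by (intro orth[of k j]) auto
    qed
    finally show ?thesis by simp
  qed
  have "cinner y y = (\<Sum>k\<in>{1..n}. cinner (cmp k y) y)"
    using cinner_sum_left[of "\<lambda>j. cmp j y" "{1..n}" y] cmp_sum'[OF y] by simp
  also have "\<dots> = (\<Sum>k\<in>{1..n}. cinner (cmp k y) (cmp k y))" using cc by simp
  finally have "Re (cinner y y) = (\<Sum>k\<in>{1..n}. Re (cinner (cmp k y) (cmp k y)))" by simp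
  moreover have "Re (cinner (cmp i y) (cmp i y)) \<le> (\<Sum>k\<in>{1..n}. Re (cinner (cmp k y) (cmp k y)))"
    using True by (intro member_le_sum) (auto intro: cinner_self_nonneg)
  ultimately have "Re (cinner (cmp i y) (cmp i y)) \<le> Re (cinner y y)" by simp
  then show ?thesis by (simp add: norm_eq_sqrt_cinner)
qed

lemma MM_closed:
  assumes cl: "\<And>k. k \<in> {1..n} \<Longrightarrow> closed (X k)"
  shows "closed MM"
  unfolding closed_sequential_limits
proof (intro allI impI, elim conjE)
  fix f l assume fM: "\<forall>m. f m \<in> MM" and fl: "f \<longlonglongrightarrow> l"
  have cf: "Cauchy f" using fl by (rule LIMSEQ_imp_Cauchy)
  have cg: "Cauchy (\<lambda>m. cmp i (f m))" for i
    unfolding Cauchy_def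
  proof (intro allI impI)
    fix e :: real assume "e > 0"
    then obtain N where N: "\<forall>m\<ge>N. \<forall>p\<ge>N. dist (f m) (f p) < e" using cf unfolding Cauchy_def by blast
    have "dist (cmp i (f m)) (cmp i (f p)) \<le> dist (f m) (f p)" for m p
    proof -
      have "cmp i (f m) - cmp i (f p) = cmp i (f m - f p)"
        using clin_on_diff[OF cmp_lin MM_sub] fM by simp
      moreover have "f m - f p \<in> MM" using csub_diff[OF MM_sub] fM by simp
      ultimately show ?thesis unfolding dist_norm using norm_cmp by simp
    qed
    then show "\<exists>N. \<forall>m\<ge>N. \<forall>p\<ge>N. dist (cmp i (f m)) (cmp i (f p)) < e"
      using N by (meson le_less_trans)
  qed
  define z where "z i = (if i \<in> {1..n} then lim (\<lambda>m. cmp i (f m)) else 0)" for i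
  have zl: "(\<lambda>m. cmp i (f m)) \<longlonglongrightarrow> z i" if "i \<in> {1..n}" for i
    using Cauchy_convergent[OF cg[of i]] that unfolding z_def by (simp add: convergent_LIMSEQ_iff)
  have admz: "adm z"
    unfolding adm_def
  proof (intro conjI ballI allI impI)
    fix k assume k: "k \<in> {1..n}"
    show "z k \<in> X k" using closed_sequentially[OF cl[OF k] _ zl[OF k]] cmp_in fM k by auto
  next
    fix k :: nat assume "k \<notin> {1..n}" then show "z k = 0" unfolding z_def by auto
  qed
  have "(\<lambda>m. \<Sum>i=1..n. cmp i (f m)) \<longlonglongrightarrow> (\<Sum>i=1..n. z i)"
    by (rule tendsto_sum) (use zl in auto)
  then have "f \<longlonglongrightarrow> (\<Sum>i=1..n. z i)" using cmp_sum' fM by simp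
  then have "l = (\<Sum>i=1..n. z i)" using fl LIMSEQ_unique by blast
  then show "l \<in> MM" using build_M[OF admz] by simp
qed

end



context tri
begin

lemma D_clin: "k \<in> {1..n} \<Longrightarrow> clin_on (X k) (D k)"
  using Dlin unfolding bounded_clinear_on_def clin_on_def by blast

lemma invk:
  assumes k: "k \<in> {1..n}"
  shows "invertible_on (X k) (X k) (lam_minus \<mu> (D k)) = invertible_on (X k) (X k) (EE k)"
    "left_invertible_on (X k) (X k) (lam_minus \<mu> (D k)) = left_invertible_on (X k) (X k) (EE k)"
    "right_invertible_on (X k) (X k) (lam_minus \<mu> (D k)) = right_invertible_on (X k) (X k) (EE k)"
  using inv_conv[OF Xsub'[OF k] D_clin[OF k], of \<mu>] unfolding EE_def by auto

lemma E_img: "k \<in> {1..n} \<Longrightarrow> EE k ` X k \<subseteq> X k"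
  using E_in by auto

lemma S_lin: "clin_on MM SS"
  unfolding clin_on_def
  using S_eq clin_on_add[OF U_lin[OF le_refl]] clin_on_scale[OF U_lin[OF le_refl]]
    csub_add[OF MM_sub] csub_scale[OF MM_sub]
  by (auto simp: cv.scale_minus_right)

lemma S_in: "y \<in> MM \<Longrightarrow> SS y \<in> MM"
  using S_eq U_in[OF le_refl] csub_neg[OF MM_sub] by simp

lemma EE_inv_facts:
  assumes k: "k \<in> {1..n}" and inv: "invertible_on (X k) (X k) (EE k)"
  shows "alpha_op (X k) (EE k) = 0" "beta_op (X k) (X k) (EE k) = 0"
  using inv cdim_zero_iff[of "{0::'h}"] unfolding invertible_on_def left_invertible_on_def right_invertible_on_def
  by auto

lemma part1:
  assumes cl: "\<And>k. k \<in> {1..n} \<Longrightarrow> closed (X k)"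
    and allinv: "\<forall>k\<in>{1..n}. invertible_on (X k) (X k) (EE k)"
  shows "invertible_on MM MM SS"
proof -
  have a0: "(\<Sum>s\<in>{0<..n}. alpha_op (X s) (EE s)) = 0"
    using allinv EE_inv_facts by (intro sum.neutral) auto
  have b0: "(\<Sum>s=1..n. beta_op (X s) (X s) (EE s)) = 0"
    using allinv EE_inv_facts by (intro sum.neutral) auto
  have "cdim (Kab 0 n) = 0" using lemmaA[of n 0] a0 by simp
  then have K0: "Kab 0 n = {0}" using cdim_zero_iff[of "Kab 0 n"] by simp
  have Mbn: "Mb n = MM" unfolding Mb_def using cmp_out by auto
  have c0: "codim_in (UU n ` MM) MM = 0" using lemmaB[of n] b0 Mbn by simp
  have UUsub: "UU n ` MM \<subseteq> MM" using U_in by auto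
  have "0 \<in> UU n ` MM" using clin_on_zero[OF U_lin[OF le_refl] csub_zero[OF MM_sub]] csub_zero[OF MM_sub] by force
  then have Uim: "UU n ` MM = MM" using codim_zero_iff[OF _ UUsub] c0 by simp
  have ker: "kernel_on MM SS = {0}"
  proof
    show "kernel_on MM SS \<subseteq> {0}"
    proof
      fix y assume "y \<in> kernel_on MM SS"
      then have y: "y \<in> MM" "SS y = 0" unfolding kernel_on_def by auto
      then have U0: "UU n y = 0" using S_eq by simp
      have "rw i y = 0" if "i \<in> {0<..n}" for i
        using cmp_U[OF le_refl y(1), of i] U0 cmp_zero that by auto
      moreover have "cmp i y = 0" if "i \<notin> {0<..n}" for i using cmp_out[OF y(1)] that by auto
      ultimately have "y \<in> Kab 0 n" unfolding Kab_def using y by auto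
      then show "y \<in> {0}" using K0 by auto
    qed
    show "{0} \<subseteq> kernel_on MM SS"
      unfolding kernel_on_def using csub_zero[OF MM_sub] clin_on_zero[OF S_lin csub_zero[OF MM_sub]] by auto
  qed
  have im: "SS ` MM = MM"
  proof
    show "SS ` MM \<subseteq> MM" using S_in by auto
    show "MM \<subseteq> SS ` MM"
    proof
      fix x assume "x \<in> MM"
      then obtain y where y: "y \<in> MM" "x = UU n y" using Uim by auto
      have "SS (- y) = x" using S_eq[OF csub_neg[OF MM_sub y(1)]] clin_on_neg[OF U_lin[OF le_refl] y(1)] y by simp
      then show "x \<in> SS ` MM" using csub_neg[OF MM_sub y(1)] by force
    qed
  qed
  have "closed_csubspace MM" unfolding closed_csubspace_def using MM_sub MM_closed[OF cl] by auto
  then show ?thesis using inv_of_bij ker im by blast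
qed

end



context tri
begin

lemma Delta_mem:
  "\<mu> \<in> Delta n X D \<longleftrightarrow>
     (\<exists>k\<in>{2..n-1}.
        (\<not> right_invertible_on (X k) (X k) (lam_minus \<mu> (D k)) \<and>
           beta_op (X k) (X k) (EE k) \<le> (\<Sum>s=k+1..n. alpha_op (X s) (EE s)))
      \<or> (\<not> left_invertible_on (X k) (X k) (lam_minus \<mu> (D k)) \<and>
           alpha_op (X k) (EE k) \<le> (\<Sum>s=1..k-1. beta_op (X s) (X s) (EE s))))
   \<or> (0 < beta_op (X 1) (X 1) (EE 1) \<and> beta_op (X 1) (X 1) (EE 1) \<le> (\<Sum>s=2..n. alpha_op (X s) (EE s)))
   \<or> (0 < alpha_op (X n) (EE n) \<and> alpha_op (X n) (EE n) \<le> (\<Sum>s=1..n-1. beta_op (X s) (X s) (EE s)))"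
  unfolding Delta_def spec_r_def spec_l_def EE_def by simp

lemma part2:
  assumes n2: "2 \<le> n" and d: "\<mu> \<in> Delta n X D"
  shows "\<exists>k\<in>{1..n}. \<not> invertible_on (X k) (X k) (EE k)"
proof -
  have n1: "1 \<in> {1..n}" "n \<in> {1..n}" using n2 by auto
  from d[unfolded Delta_mem] consider
    (a) k where "k \<in> {2..n-1}" "\<not> right_invertible_on (X k) (X k) (lam_minus \<mu> (D k)) \<or> \<not> left_invertible_on (X k) (X k) (lam_minus \<mu> (D k))"
    | (b1) "0 < beta_op (X 1) (X 1) (EE 1)"
    | (b2) "0 < alpha_op (X n) (EE n)"
    by blast
  then show ?thesis
  proof cases
    case (a k)
    then have k: "k \<in> {1..n}" by auto
    then show ?thesis using a invk[OF k] unfolding invertible_on_def by auto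
  next
    case b1
    then show ?thesis using n1 unfolding invertible_on_def right_invertible_on_def by (intro bexI[of _ 1]) auto
  next
    case b2
    then show ?thesis using n1 unfolding invertible_on_def left_invertible_on_def by (intro bexI[of _ n]) auto
  qed
qed

lemma part3:
  assumes n2: "2 \<le> n" and k: "k \<in> {1..n}" and ninv: "\<not> invertible_on (X k) (X k) (EE k)"
    and Sinv: "invertible_on MM MM SS"
    and cl: "\<And>k. k \<in> {1..n} \<Longrightarrow> closed (X k)"
  shows "\<mu> \<in> Delta n X D"
proof -
  have inj: "\<forall>y\<in>MM. SS y = 0 \<longrightarrow> y = 0"
    using inv_ker[of MM SS] Sinv unfolding invertible_on_def kernel_on_def by auto
  have surj: "SS ` MM = MM"
    using inv_im[OF _ MM_sub S_lin] Sinv S_in unfolding invertible_on_def by auto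
  have Xc: "closed_csubspace (X j)" if "j \<in> {1..n}" for j
    using Xsub'[OF that] cl[OF that] unfolding closed_csubspace_def by simp
  have bij_inv: "invertible_on (X j) (X j) (EE j)"
    if j: "j \<in> {1..n}" and a: "alpha_op (X j) (EE j) = 0" and b: "beta_op (X j) (X j) (EE j) = 0" for j
  proof (rule inv_of_bij[OF Xc[OF j]])
    show "kernel_on (X j) (EE j) = {0}" using a cdim_zero_iff[of "kernel_on (X j) (EE j)"] unfolding alpha_op_def by simp
    have "0 \<in> EE j ` X j" using E_zero[OF j] csub_zero[OF Xsub'[OF j]] by force
    then show "EE j ` X j = X j" using b codim_zero_iff[OF _ E_img[OF j]] unfolding beta_op_def by simp
  qed
  have SBk: "beta_op (X k) (X k) (EE k) \<le> (\<Sum>s\<in>{k<..n}. alpha_op (X s) (EE s))" using SB[OF surj k] .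
  have IBk: "alpha_op (X k) (EE k) \<le> (\<Sum>s=1..k-1. beta_op (X s) (X s) (EE s))" using IB[OF inj k] .
  have ivl: "{k<..n} = {k+1..n}" by auto
  consider "k = 1" | "k = n" | "k \<in> {2..n-1}" using k n2 by fastforce
  then show ?thesis
  proof cases
    case 1
    have "alpha_op (X 1) (EE 1) = 0" using IBk 1 by simp
    then have b: "0 < beta_op (X 1) (X 1) (EE 1)" using bij_inv[of 1] ninv 1 k by (auto simp: zero_less_iff_neq_zero)
    have "{1<..n} = {2..n}" by auto
    then show ?thesis unfolding Delta_mem using b SBk 1 by auto
  next
    case 2
    have "beta_op (X n) (X n) (EE n) = 0" using SBk 2 by simp
    then have a: "0 < alpha_op (X n) (EE n)" using bij_inv[of n] ninv 2 k by (auto simp: zero_less_iff_neq_zero)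
    then show ?thesis unfolding Delta_mem using a IBk 2 by auto
  next
    case 3
    have "\<not> left_invertible_on (X k) (X k) (lam_minus \<mu> (D k)) \<or> \<not> right_invertible_on (X k) (X k) (lam_minus \<mu> (D k))"
      using ninv invk[OF k] unfolding invertible_on_def by auto
    moreover have "beta_op (X k) (X k) (EE k) \<le> (\<Sum>s=k+1..n. alpha_op (X s) (EE s))" using SBk ivl by simp
    ultimately show ?thesis unfolding Delta_mem using 3 IBk by blast
  qed
qed

end



theorem mainTheorem15:
  fixes n :: nat and X :: "nat \<Rightarrow> 'h::chilbert_space set" and D :: "nat \<Rightarrow> 'h \<Rightarrow> 'h"
  assumes "n \<ge> 2"
    and "\<forall>k\<in>{1..n}. closed_csubspace (X k) \<and> infinite_dim (X k)"
    and "\<forall>j\<in>{1..n}. \<forall>k\<in>{1..n}. j \<noteq> k \<longrightarrow> (\<forall>x\<in>X j. \<forall>y\<in>X k. cinner x y = 0)"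
    and "\<forall>k\<in>{1..n}. bounded_clinear_on (X k) (X k) (D k)"
  shows "(\<forall>A \<in> Bn n X.
            (\<Union>k\<in>{1..n}. spec (X k) (D k)) = spec (orth_dsum n X) (Tnd n X D A) \<union> Delta n X D)
       \<and> (Delta n X D = {} \<longrightarrow>
            (\<forall>A \<in> Bn n X. (\<Union>k\<in>{1..n}. spec (X k) (D k)) = spec (orth_dsum n X) (Tnd n X D A)))"
proof -
  have cl: "\<And>k. k \<in> {1..n} \<Longrightarrow> closed (X k)" using assms(2) unfolding closed_csubspace_def by auto
  have key: "(\<Union>k\<in>{1..n}. spec (X k) (D k)) = spec (orth_dsum n X) (Tnd n X D A) \<union> Delta n X D"
    if A: "A \<in> Bn n X" for A
  proof (rule set_eqI)
    fix \<mu>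
    interpret t: tri n X D A \<mu>
    proof
      show "\<And>k. k \<in> {1..n} \<Longrightarrow> csubspace (X k)" using assms(2) unfolding closed_csubspace_def by auto
      show "\<And>j k x y. j \<in> {1..n} \<Longrightarrow> k \<in> {1..n} \<Longrightarrow> j \<noteq> k \<Longrightarrow> x \<in> X j \<Longrightarrow> y \<in> X k \<Longrightarrow> cinner x y = 0"
        using assms(3) by blast
      show "\<And>k. k \<in> {1..n} \<Longrightarrow> bounded_clinear_on (X k) (X k) (D k)" using assms(4) by blast
      show "\<And>i j. 1 \<le> i \<Longrightarrow> i < j \<Longrightarrow> j \<le> n \<Longrightarrow> bounded_clinear_on (X j) (X i) (A i j)"
        using A unfolding Bn_def by blast
    qed
    have l: "\<mu> \<in> (\<Union>k\<in>{1..n}. spec (X k) (D k)) \<longleftrightarrow> (\<exists>k\<in>{1..n}. \<not> invertible_on (X k) (X k) (t.EE k))"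
      unfolding spec_def using t.invk by auto
    have r: "\<mu> \<in> spec (orth_dsum n X) (Tnd n X D A) \<longleftrightarrow> \<not> invertible_on t.MM t.MM t.SS"
      unfolding spec_def t.MM_def t.SS_def by simp
    show "\<mu> \<in> (\<Union>k\<in>{1..n}. spec (X k) (D k)) \<longleftrightarrow> \<mu> \<in> spec (orth_dsum n X) (Tnd n X D A) \<union> Delta n X D"
      unfolding l Un_iff r
      using t.part1[OF cl] t.part2[OF assms(1)] t.part3[OF assms(1) _ _ _ cl] by blast
  qed
  then show ?thesis by auto
qed


end
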